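(* Let $r \geqslant 4$ and let $F$ be a graph which is an $r$-witness set. Then $e(F) \geqslant \lambda(r)\big(v(F) - 2\big) + 1$.
   Context: $\lambda(r) = \frac{\binom{r}{2}-2}{r-2}$. The $K_r$-bootstrap process on $K_n$ from $G$: repeatedly add any edge of $K_n$ which is the only missing edge of some $r$-clique; $\langle G\rangle_{K_r}$ is the final closure. Witness-Set Algorithm: for $e \in G$ set $F(e) = \{e\}$. Choose an order in which to infect the edges of $\langle G\rangle_{K_r} \setminus G$ one by one, each newly infected edge completing some $r$-clique all of whose other edges are already in $G$ or already infected (if several cliques are completed, choose one). When $e$ is infected by the chosen $r$-clique $K$, set $F(e) := \bigcup_{e' \in K,\, e' \neq e} F(e')$. A graph $F$ is an $r$-witness set if there exist a graph $G$, an edge $e \in \langle G\rangle_{K_r}$ and a realization of this algorithm (choice of order and cliques) with $F = F(e)$; here $v(F)$ is the number of vertices spanned by the edges of $F$. *)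

theory Defs
  imports Complex_Main
begin

text \<open>Graphs on the vertex set {0..<n} of K_n; an edge is a 2-element vertex set,
a graph is a set of edges.\<close>

definition edgesK :: "nat \<Rightarrow> nat set set" where
  "edgesK n = {e. e \<subseteq> {..<n} \<and> card e = 2}"

definition cliqueE :: "nat set \<Rightarrow> nat set set" where
  "cliqueE K = {e. e \<subseteq> K \<and> card e = 2}"

text \<open>Final closure of the K_r-bootstrap process on K_n started from G.\<close>
inductive_set bootstrap :: "nat \<Rightarrow> nat \<Rightarrow> nat set set \<Rightarrow> nat set set"
  for r n G where
  base: "e \<in> G \<Longrightarrow> e \<in> bootstrap r n G"
| step: "\<lbrakk> K \<subseteq> {..<n}; card K = r; e \<in> cliqueE K;
           \<forall>f \<in> cliqueE K - {e}. f \<in> bootstrap r n G \<rbrakk> \<Longrightarrow> e \<in> bootstrap r n G"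

text \<open>A realization: a list of (infected edge, chosen r-clique vertex set), in infection order.\<close>
definition valid_seq :: "nat \<Rightarrow> nat \<Rightarrow> nat set set \<Rightarrow> (nat set \<times> nat set) list \<Rightarrow> bool" where
  "valid_seq r n G seq \<longleftrightarrow>
     distinct (map fst seq) \<and>
     (\<forall>i < length seq.
        fst (seq ! i) \<notin> G \<and>
        snd (seq ! i) \<subseteq> {..<n} \<and> card (snd (seq ! i)) = r \<and>
        fst (seq ! i) \<in> cliqueE (snd (seq ! i)) \<and>
        (\<forall>f \<in> cliqueE (snd (seq ! i)) - {fst (seq ! i)}.
            f \<in> G \<or> f \<in> set (map fst (take i seq))))"

text \<open>The witness sets F(.) computed by the algorithm; the argument list is the
realization in REVERSE order (last infected edge first).\<close>
fun witmapR :: "nat set set \<Rightarrow> (nat set \<times> nat set) list \<Rightarrow> nat set \<Rightarrow> nat set set" where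
  "witmapR G [] = (\<lambda>e. if e \<in> G then {e} else {})"
| "witmapR G ((e, K) # ys) =
     (witmapR G ys)(e := (\<Union>f \<in> cliqueE K - {e}. witmapR G ys f))"

definition witmap :: "nat set set \<Rightarrow> (nat set \<times> nat set) list \<Rightarrow> nat set \<Rightarrow> nat set set" where
  "witmap G seq = witmapR G (rev seq)"

definition witness_set :: "nat \<Rightarrow> nat set set \<Rightarrow> bool" where
  "witness_set r F \<longleftrightarrow>
     (\<exists>n G seq e. G \<subseteq> edgesK n \<and> valid_seq r n G seq \<and>
        set (map fst seq) = bootstrap r n G - G \<and>
        e \<in> bootstrap r n G \<and> F = witmap G seq e)"

definition lam :: "nat \<Rightarrow> real" where
  "lam r = (real (r choose 2) - 2) / (real r - 2)"

definition vF :: "nat set set \<Rightarrow> nat" where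
  "vF F = card (\<Union>F)"

end

theory Submission
  imports Defs
begin


lemma choose2_real: "real (q choose 2) = real q * (real q - 1) / 2"
proof (induction q)
  case 0 then show ?case by simp
next
  case (Suc q)
  have "(Suc q) choose 2 = (q choose 1) + (q choose 2)"
    by (metis Suc_1 binomial_Suc_Suc)
  then have "real (Suc q choose 2) = real q + real (q choose 2)" by simp
  then show ?case using Suc by (simp add: field_simps)
qed

lemma lam_mult: assumes "r \<ge> 4" shows "lam r * (real r - 2) = real (r choose 2) - 2"
  using assms by (simp add: lam_def)

lemma lam_nonneg: assumes "r \<ge> 4" shows "lam r \<ge> 0"
proof -
  have c: "real (r choose 2) = real r * (real r - 1) / 2" by (rule choose2_real)
  have R: "real r \<ge> 4" using assms by simp
  have "4 * 3 \<le> real r * (real r - 1)" using R by (intro mult_mono) auto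
  then have "real (r choose 2) \<ge> 6" unfolding c by simp
  then show ?thesis using assms by (simp add: lam_def)
qed

lemma key_ineq:
  assumes r4: "r \<ge> 4" and q2: "2 \<le> q" and qr: "q < r"
  shows "real (q choose 2) \<le> 1 + lam r * (real q - 2)"
proof -
  have c: "real (q choose 2) = real q * (real q - 1) / 2" by (rule choose2_real)
  have cr: "real (r choose 2) = real r * (real r - 1) / 2" by (rule choose2_real)
  have R: "real r \<ge> 4" "real q \<ge> 2" "real q + 1 \<le> real r" using assms by auto
  have "(real q + 1) * (real r - 2) \<le> real r * (real r - 2)"
    using R by (intro mult_right_mono) auto
  also have "\<dots> \<le> real r * (real r - 1) - 4" using R by (simp add: algebra_simps)
  finally have h: "(real q + 1) * (real r - 2) \<le> real r * (real r - 1) - 4" .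
  have "(real q - 2) * ((real q + 1) * (real r - 2)) \<le> (real q - 2) * (real r * (real r - 1) - 4)"
    using h R by (intro mult_left_mono) auto
  then have hh: "(real q - 2) * ((real q + 1) * (real r - 2)) / 2 \<le> (real q - 2) * (real r * (real r - 1) - 4) / 2"
    by simp
  have e1: "(real (q choose 2) - 1) * (real r - 2) = (real q - 2) * ((real q + 1) * (real r - 2)) / 2"
    unfolding c by (simp add: field_simps; simp add: algebra_simps)
  have e2: "(real q - 2) * (real (r choose 2) - 2) = (real q - 2) * (real r * (real r - 1) - 4) / 2"
    unfolding cr by (simp add: field_simps; simp add: algebra_simps)
  have h2: "(real (q choose 2) - 1) * (real r - 2) \<le> (real q - 2) * (real (r choose 2) - 2)"
    unfolding e1 e2 by (rule hh)
  have "real (q choose 2) - 1 \<le> (real q - 2) * (real (r choose 2) - 2) / (real r - 2)"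
    using h2 R by (simp add: pos_le_divide_eq)
  then show ?thesis unfolding lam_def by (simp add: algebra_simps)
qed



definition EJ :: "(nat \<Rightarrow> nat set) \<Rightarrow> nat set \<Rightarrow> nat set set" where
  "EJ V J = (\<Union>l\<in>J. cliqueE (V l))"
definition VJ :: "(nat \<Rightarrow> nat set) \<Rightarrow> nat set \<Rightarrow> nat set" where
  "VJ V J = (\<Union>l\<in>J. V l)"
definition phi :: "nat \<Rightarrow> (nat \<Rightarrow> nat set) \<Rightarrow> nat set \<Rightarrow> real" where
  "phi r V J = real (card (EJ V J)) - real (card J) - lam r * (real (card (VJ V J)) - 2)"

lemma finite_cliqueE: "finite K \<Longrightarrow> finite (cliqueE K)"
  unfolding cliqueE_def by (rule finite_subset[of _ "Pow K"]) auto

lemma card_cliqueE: "finite K \<Longrightarrow> card (cliqueE K) = card K choose 2"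
  unfolding cliqueE_def by (rule n_subsets)

lemma finite_EJ: "finite J \<Longrightarrow> \<forall>l\<in>J. finite (V l) \<Longrightarrow> finite (EJ V J)"
  unfolding EJ_def using finite_cliqueE by auto
lemma finite_VJ: "finite J \<Longrightarrow> \<forall>l\<in>J. finite (V l) \<Longrightarrow> finite (VJ V J)"
  unfolding VJ_def by auto

lemma phi_single: assumes "r \<ge> 4" "finite (V i)" "card (V i) = r"
  shows "phi r V {i} = 1"
  using assms lam_mult[OF assms(1)]
  by (simp add: phi_def EJ_def VJ_def card_cliqueE)

lemma merge:
  assumes fA: "finite A" and fB: "finite B" and dj: "A \<inter> B = {}"
    and fV: "\<forall>l\<in>A\<union>B. finite (V l)"
    and pA: "phi r V A \<ge> 1" and pB: "phi r V B \<ge> 1"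
    and q: "card (VJ V A \<inter> VJ V B) = q"
    and bound: "real (card (EJ V A \<inter> EJ V B)) \<le> 1 + lam r * (real q - 2)"
  shows "phi r V (A \<union> B) \<ge> 1"
proof -
  have fEA: "finite (EJ V A)" and fEB: "finite (EJ V B)"
    using fA fB fV by (auto intro!: finite_EJ)
  have fVA: "finite (VJ V A)" and fVB: "finite (VJ V B)"
    using fA fB fV by (auto intro!: finite_VJ)
  have E: "EJ V (A \<union> B) = EJ V A \<union> EJ V B" unfolding EJ_def by auto
  have Vv: "VJ V (A \<union> B) = VJ V A \<union> VJ V B" unfolding VJ_def by auto
  have cE: "card (EJ V A \<union> EJ V B) + card (EJ V A \<inter> EJ V B) = card (EJ V A) + card (EJ V B)"
    using card_Un_Int[OF fEA fEB] by simp
  have cV: "card (VJ V A \<union> VJ V B) + q = card (VJ V A) + card (VJ V B)"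
    using card_Un_Int[OF fVA fVB] q by simp
  have cJ: "card (A \<union> B) = card A + card B" using card_Un_disjoint[OF fA fB dj] .
  have rE: "real (card (EJ V A \<union> EJ V B)) = real (card (EJ V A)) + real (card (EJ V B)) - real (card (EJ V A \<inter> EJ V B))"
    using cE by (simp add: algebra_simps flip: of_nat_add)
  have rV: "real (card (VJ V A \<union> VJ V B)) = real (card (VJ V A)) + real (card (VJ V B)) - real q"
    using cV by (simp add: algebra_simps flip: of_nat_add)
  have "phi r V (A \<union> B) = phi r V A + phi r V B - real (card (EJ V A \<inter> EJ V B)) + lam r * (real q - 2)"
    unfolding phi_def E Vv rE rV cJ by (simp add: algebra_simps)
  then show ?thesis using pA pB bound by linarith
qed



definition cliqfam :: "nat \<Rightarrow> nat \<Rightarrow> (nat \<Rightarrow> nat set) \<Rightarrow> (nat \<Rightarrow> nat set) \<Rightarrow> bool" where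
  "cliqfam r len V u \<longleftrightarrow> (\<forall>l<len. finite (V l) \<and> card (V l) = r \<and> u l \<in> cliqueE (V l)) \<and>
     (\<forall>j l. j < l \<and> l < len \<longrightarrow> u l \<notin> cliqueE (V j))"

definition goodP :: "nat \<Rightarrow> (nat \<Rightarrow> nat set) \<Rightarrow> nat set set \<Rightarrow> nat set \<Rightarrow> bool" where
  "goodP r V P S \<longleftrightarrow> \<Union>P = S \<and> (\<forall>B\<in>P. B \<noteq> {}) \<and>
     (\<forall>B\<in>P. \<forall>B'\<in>P. B \<noteq> B' \<longrightarrow> B \<inter> B' = {} \<and> card (VJ V B \<inter> VJ V B') \<le> 1) \<and>
     (\<forall>B\<in>P. phi r V B \<ge> 1)"

lemma inter_bound:
  assumes r4: "r \<ge> 4" and fi: "finite (V i)" and ci: "card (V i) = r" and ui: "u i \<in> cliqueE (V i)"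
    and X: "X = V i \<inter> VJ V B" and q: "card (VJ V A \<inter> VJ V B) = q" and q2: "q \<ge> 2"
    and sub: "V i \<subseteq> VJ V A" and fA: "finite (VJ V A)"
    and EE: "EJ V A \<inter> EJ V B \<subseteq> cliqueE X - {u i}"
  shows "real (card (EJ V A \<inter> EJ V B)) \<le> 1 + lam r * (real q - 2)"
proof -
  have fX: "finite X" using X fi by auto
  have le1: "card (EJ V A \<inter> EJ V B) \<le> card (cliqueE X - {u i})"
    using EE fX finite_cliqueE by (intro card_mono) auto
  have XA: "X \<subseteq> VJ V A \<inter> VJ V B" using X sub by auto
  have qq: "card X \<le> q" using card_mono[OF _ XA] fA q by auto
  have ln: "lam r \<ge> 0" using lam_nonneg[OF r4] .
  have mono: "1 + lam r * (real (card X) - 2) \<le> 1 + lam r * (real q - 2)"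
    using qq ln by (simp add: mult_left_mono)
  show ?thesis
  proof (cases "card X \<le> 1")
    case True
    have "cliqueE X = {}"
    proof (rule ccontr)
      assume "cliqueE X \<noteq> {}"
      then obtain e where e1: "e \<subseteq> X" and e2: "card e = 2" unfolding cliqueE_def by auto
      have "2 \<le> card X" using card_mono[OF fX e1] e2 by simp
      then show False using True by simp
    qed
    then have "card (EJ V A \<inter> EJ V B) = 0" using le1 by simp
    moreover have "1 + lam r * (real q - 2) \<ge> 0" using q2 ln by simp
    ultimately show ?thesis by simp
  next
    case False
    show ?thesis
    proof (cases "card X < r")
      case True
      have "card (cliqueE X - {u i}) \<le> card X choose 2"
        using card_cliqueE[OF fX] card_Diff1_le[of "cliqueE X" "u i"] by simp
      then have "real (card (EJ V A \<inter> EJ V B)) \<le> real (card X choose 2)" using le1 by linarith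
      also have "\<dots> \<le> 1 + lam r * (real (card X) - 2)"
        using key_ineq[OF r4 _ True] False by simp
      finally show ?thesis using mono by linarith
    next
      case False
      have "X \<subseteq> V i" using X by auto
      moreover have "card X \<le> card (V i)" using card_mono[OF fi] \<open>X \<subseteq> V i\<close> by blast
      ultimately have XV: "X = V i" using card_subset_eq[OF fi] False ci by simp
      have "card (cliqueE X - {u i}) = (r choose 2) - 1"
        using XV ui card_cliqueE[OF fi] ci finite_cliqueE[OF fi] by simp
      moreover have "(r choose 2) \<ge> 1" using zero_less_binomial[of 2 r] r4 by (simp add: Suc_le_eq)
      ultimately have "real (card (cliqueE X - {u i})) = real (r choose 2) - 1" by simp
      also have "\<dots> = 1 + lam r * (real (card X) - 2)" using lam_mult[OF r4] XV ci by simp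
      finally show ?thesis using le1 mono by linarith
    qed
  qed
qed



lemma two_le_card_inter:
  assumes "x \<subseteq> Y" "card x = 2" "finite Y" shows "2 \<le> card Y"
  using card_mono[OF assms(3,1)] assms(2) by simp

lemma step:
  assumes r4: "r \<ge> 4" and cf: "cliqfam r len V u" and il: "i < len"
    and gP: "goodP r V P S" and Sl: "S \<subseteq> {..<i}"
  shows "\<exists>P'. goodP r V P' (insert i S)"
proof -
  have Vc: "\<And>l. l < len \<Longrightarrow> finite (V l) \<and> card (V l) = r \<and> u l \<in> cliqueE (V l)"
    using cf unfolding cliqfam_def by auto
  have fresh: "\<And>j l. j < l \<Longrightarrow> l < len \<Longrightarrow> u l \<notin> cliqueE (V j)"
    using cf unfolding cliqfam_def by auto
  have UP: "\<Union>P = S" and ne: "\<forall>B\<in>P. B \<noteq> {}"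
    and pw: "\<forall>B\<in>P. \<forall>B'\<in>P. B \<noteq> B' \<longrightarrow> B \<inter> B' = {} \<and> card (VJ V B \<inter> VJ V B') \<le> 1"
    and ph: "\<forall>B\<in>P. phi r V B \<ge> 1"
    using gP unfolding goodP_def by auto
  have fS: "finite S" using Sl finite_subset by blast
  have "P \<subseteq> Pow S" using UP by auto
  moreover have "finite (Pow S)" using fS by simp
  ultimately have fP: "finite P" by (rule finite_subset)
  have fVl: "finite (V l)" if "l \<in> insert i S" for l
  proof -
    have "l < len" using that Sl il by auto
    then show ?thesis using Vc by blast
  qed
  define Ms where "Ms = {M. M \<subseteq> P \<and> phi r V (insert i (\<Union>M)) \<ge> 1}"
  have e0: "{} \<in> Ms" unfolding Ms_def using phi_single[OF r4] Vc[OF il] by simp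
  have "Ms \<subseteq> Pow P" unfolding Ms_def by blast
  moreover have "finite (Pow P)" using fP by simp
  ultimately have fMs: "finite Ms" by (rule finite_subset)
  define c where "c = Max (card ` Ms)"
  have "c \<in> card ` Ms" unfolding c_def using fMs e0 by (intro Max_in) blast+
  then obtain M where MM: "M \<in> Ms" and cM: "card M = c" by auto
  have mx: "\<And>M'. M' \<in> Ms \<Longrightarrow> card M' \<le> card M"
    unfolding cM c_def using fMs by (intro Max_ge) blast+
  have MP: "M \<subseteq> P" and pA: "phi r V (insert i (\<Union>M)) \<ge> 1" using MM unfolding Ms_def by auto
  have fM: "finite M" using fP MP finite_subset by blast
  define A where "A = insert i (\<Union>M)"
  have AS: "A \<subseteq> insert i S" unfolding A_def using MP UP by auto
  have fA: "finite A" using AS fS finite_subset by blast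
  have clos: "card (VJ V A \<inter> VJ V B) \<le> 1" if BP: "B \<in> P" and BM: "B \<notin> M" for B
  proof (rule ccontr)
    assume "\<not> ?thesis"
    then have q2: "card (VJ V A \<inter> VJ V B) \<ge> 2" by simp
    have BS: "B \<subseteq> S" using BP UP by auto
    have fB: "finite B" using BS fS finite_subset by blast
    have iB: "i \<notin> B" using BS Sl by auto
    have dj: "A \<inter> B = {}"
    proof -
      have "B'' \<inter> B = {}" if "B'' \<in> M" for B''
      proof -
        have "B'' \<in> P" "B'' \<noteq> B" using that MP BM by auto
        then show ?thesis using pw BP by blast
      qed
      then have "\<Union>M \<inter> B = {}" by blast
      then show ?thesis unfolding A_def using iB by auto
    qed
    have fVAB: "\<forall>l\<in>A\<union>B. finite (V l)" using AS BS fVl by auto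
    have fVA: "finite (VJ V A)" using finite_VJ[OF fA] fVAB by auto
    have fVB: "finite (VJ V B)" using finite_VJ[OF fB] fVAB by auto
    have subA: "V i \<subseteq> VJ V A" unfolding VJ_def A_def by auto
    have EE: "EJ V A \<inter> EJ V B \<subseteq> cliqueE (V i \<inter> VJ V B) - {u i}"
    proof
      fix x assume x: "x \<in> EJ V A \<inter> EJ V B"
      then obtain l where lA: "l \<in> A" and xl: "x \<in> cliqueE (V l)" unfolding EJ_def by auto
      from x obtain l' where lB: "l' \<in> B" and xl': "x \<in> cliqueE (V l')" unfolding EJ_def by auto
      have x2: "card x = 2" and xsub': "x \<subseteq> V l'" using xl' unfolding cliqueE_def by auto
      have xB: "x \<subseteq> VJ V B" using xsub' lB unfolding VJ_def by auto
      have li: "l = i"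
      proof (rule ccontr)
        assume "l \<noteq> i"
        then obtain B'' where B''M: "B'' \<in> M" and lB'': "l \<in> B''" using lA unfolding A_def by auto
        have "B'' \<noteq> B" using B''M BM by auto
        then have c1: "card (VJ V B'' \<inter> VJ V B) \<le> 1" using pw B''M MP BP by auto
        have "x \<subseteq> VJ V B''" using xl lB'' unfolding VJ_def cliqueE_def by auto
        then have "x \<subseteq> VJ V B'' \<inter> VJ V B" using xB by auto
        moreover have "finite (VJ V B'' \<inter> VJ V B)" using fVB by auto
        ultimately have "2 \<le> card (VJ V B'' \<inter> VJ V B)" using two_le_card_inter x2 by blast
        then show False using c1 by simp
      qed
      have "x \<subseteq> V i" using xl li unfolding cliqueE_def by auto
      then have "x \<in> cliqueE (V i \<inter> VJ V B)" using xB x2 unfolding cliqueE_def by auto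
      moreover have "x \<noteq> u i"
      proof
        assume "x = u i"
        moreover have "l' < i" using lB BS Sl by auto
        ultimately show False using fresh[of l' i] il xl' by auto
      qed
      ultimately show "x \<in> cliqueE (V i \<inter> VJ V B) - {u i}" by auto
    qed
    have bnd: "real (card (EJ V A \<inter> EJ V B)) \<le> 1 + lam r * (real (card (VJ V A \<inter> VJ V B)) - 2)"
    proof (rule inter_bound[where X = "V i \<inter> VJ V B" and V=V and i=i and u=u and A=A and B=B])
      show "finite (V i)" "card (V i) = r" "u i \<in> cliqueE (V i)" using Vc[OF il] by auto
    qed (use r4 q2 subA fVA EE in auto)
    have pB: "phi r V B \<ge> 1" using ph BP by auto
    have "phi r V (A \<union> B) \<ge> 1"
      using merge[OF fA fB dj fVAB _ pB refl bnd] pA unfolding A_def by auto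
    moreover have "A \<union> B = insert i (\<Union>(insert B M))" unfolding A_def by auto
    ultimately have "insert B M \<in> Ms" unfolding Ms_def using MP BP by auto
    then have "card (insert B M) \<le> card M" using mx by blast
    then show False using fM BM by simp
  qed
  define P' where "P' = insert A (P - M)"
  have "goodP r V P' (insert i S)"
    unfolding goodP_def
  proof (intro conjI)
    show "\<Union>P' = insert i S" unfolding P'_def A_def using UP MP by auto
    show "\<forall>B\<in>P'. B \<noteq> {}" unfolding P'_def A_def using ne by auto
    show "\<forall>B\<in>P'. phi r V B \<ge> 1" unfolding P'_def using ph pA A_def by auto
    show "\<forall>B\<in>P'. \<forall>B'\<in>P'. B \<noteq> B' \<longrightarrow> B \<inter> B' = {} \<and> card (VJ V B \<inter> VJ V B') \<le> 1"
    proof (intro ballI impI)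
      fix B B' assume B: "B \<in> P'" and B': "B' \<in> P'" and neq: "B \<noteq> B'"
      have djA: "A \<inter> C = {}" if "C \<in> P" "C \<notin> M" for C
      proof -
        have "C \<subseteq> S" using that UP by auto
        then have "i \<notin> C" using Sl by auto
        moreover have "B'' \<inter> C = {}" if "B'' \<in> M" for B''
        proof -
          have "B'' \<in> P" "B'' \<noteq> C" using that MP \<open>C \<notin> M\<close> by auto
          then show ?thesis using pw \<open>C \<in> P\<close> by blast
        qed
        then have "\<Union>M \<inter> C = {}" by blast
        ultimately show ?thesis unfolding A_def by auto
      qed
      show "B \<inter> B' = {} \<and> card (VJ V B \<inter> VJ V B') \<le> 1"
      proof (cases "B = A")
        case True
        then have "B' \<in> P - M" using B' neq unfolding P'_def by auto
        then have "B' \<in> P" "B' \<notin> M" by auto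
        then show ?thesis using True djA[of B'] clos[of B'] by simp
      next
        case False
        then have BPM: "B \<in> P - M" using B unfolding P'_def by auto
        show ?thesis
        proof (cases "B' = A")
          case True
          have BPM': "B \<in> P" "B \<notin> M" using BPM by auto
          have "B \<inter> A = {}" using djA[OF BPM'] by blast
          moreover have "VJ V B \<inter> VJ V A = VJ V A \<inter> VJ V B" by blast
          ultimately show ?thesis using True clos[OF BPM'] by simp
        next
          case False
          then have "B' \<in> P - M" using B' unfolding P'_def by auto
          then show ?thesis using BPM pw neq by auto
        qed
      qed
    qed
  qed
  then show ?thesis by blast
qed



lemma blocks:
  assumes r4: "r \<ge> 4" and cf: "cliqfam r len V u" and J: "J \<subseteq> {..<len}"
  shows "\<exists>P. goodP r V P J"
proof -
  have "\<exists>P. goodP r V P (J \<inter> {..<i})" if "i \<le> len" for i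
    using that
  proof (induction i)
    case 0
    have "goodP r V {} (J \<inter> {..<0})" unfolding goodP_def by simp
    then show ?case by blast
  next
    case (Suc i)
    then obtain P where P: "goodP r V P (J \<inter> {..<i})" by auto
    show ?case
    proof (cases "i \<in> J")
      case True
      have "J \<inter> {..<Suc i} = insert i (J \<inter> {..<i})" using True by auto
      moreover have "\<exists>P'. goodP r V P' (insert i (J \<inter> {..<i}))"
        using step[OF r4 cf _ P] Suc.prems by auto
      ultimately show ?thesis by simp
    next
      case False
      have "J \<inter> {..<Suc i} = J \<inter> {..<i}" using False by (auto simp: less_Suc_eq)
      then show ?thesis using P by auto
    qed
  qed
  moreover have "J \<inter> {..<len} = J" using J by auto
  ultimately show ?thesis by (metis order_refl)
qed

lemma phi_conn:
  assumes r4: "r \<ge> 4" and cf: "cliqfam r len V u" and J: "J \<subseteq> {..<len}"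
    and lJ: "l \<in> J" and mx: "\<forall>a\<in>J. a \<le> l"
    and conn: "\<forall>a\<in>J. a \<noteq> l \<longrightarrow> (\<exists>b\<in>J. a < b \<and> u a \<in> cliqueE (V b))"
  shows "phi r V J \<ge> 1"
proof -
  have Vc: "\<And>l. l < len \<Longrightarrow> finite (V l) \<and> card (V l) = r \<and> u l \<in> cliqueE (V l)"
    using cf unfolding cliqfam_def by auto
  obtain P where gP: "goodP r V P J" using blocks[OF r4 cf J] by auto
  have UP: "\<Union>P = J"
    and pw: "\<forall>B\<in>P. \<forall>B'\<in>P. B \<noteq> B' \<longrightarrow> B \<inter> B' = {} \<and> card (VJ V B \<inter> VJ V B') \<le> 1"
    and ph: "\<forall>B\<in>P. phi r V B \<ge> 1"
    using gP unfolding goodP_def by auto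
  have fJ: "finite J" using J finite_subset by blast
  obtain B0 where B0: "B0 \<in> P" "l \<in> B0" using UP lJ by auto
  have fVB0: "finite (VJ V B0)"
  proof -
    have "B0 \<subseteq> J" using B0 UP by auto
    then show ?thesis using finite_VJ[of B0 V] fJ J Vc finite_subset by blast
  qed
  have "\<forall>a\<in>J. l - a = d \<longrightarrow> a \<in> B0" for d
  proof (induction d rule: less_induct)
    case (less d)
    show ?case
    proof (intro ballI impI)
      fix a assume aJ: "a \<in> J" and d: "l - a = d"
      show "a \<in> B0"
      proof (cases "a = l")
        case True then show ?thesis using B0 by simp
      next
        case False
        then obtain b where bJ: "b \<in> J" and ab: "a < b" and ub: "u a \<in> cliqueE (V b)"
          using conn aJ by auto
        have "b \<le> l" using mx bJ by auto
        then have "l - b < d" using ab d by auto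
        then have bB0: "b \<in> B0" using less bJ by blast
        obtain Ba where Ba: "Ba \<in> P" "a \<in> Ba" using UP aJ by auto
        have al: "a < len" using aJ J by auto
        have ua: "u a \<in> cliqueE (V a)" using Vc[OF al] by auto
        show ?thesis
        proof (rule ccontr)
          assume "a \<notin> B0"
          then have "Ba \<noteq> B0" using Ba by auto
          then have c1: "card (VJ V Ba \<inter> VJ V B0) \<le> 1" using pw Ba B0 by blast
          have "u a \<subseteq> VJ V Ba" using ua Ba unfolding cliqueE_def VJ_def by auto
          moreover have "u a \<subseteq> VJ V B0" using ub bB0 unfolding cliqueE_def VJ_def by auto
          ultimately have s: "u a \<subseteq> VJ V Ba \<inter> VJ V B0" by auto
          have "card (u a) = 2" using ua unfolding cliqueE_def by auto
          moreover have "finite (VJ V Ba \<inter> VJ V B0)" using fVB0 by auto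
          ultimately have "2 \<le> card (VJ V Ba \<inter> VJ V B0)" using two_le_card_inter s by blast
          then show False using c1 by simp
        qed
      qed
    qed
  qed
  then have "J \<subseteq> B0" by blast
  moreover have "B0 \<subseteq> J" using B0 UP by auto
  ultimately have "B0 = J" by auto
  then show ?thesis using ph B0 by auto
qed



fun wjR :: "(nat set \<times> nat set) list \<Rightarrow> nat set \<Rightarrow> nat set" where
  "wjR [] = (\<lambda>e. {})"
| "wjR ((e, K) # ys) = (wjR ys)(e := insert (length ys) (\<Union>f \<in> cliqueE K - {e}. wjR ys f))"

definition wj :: "(nat set \<times> nat set) list \<Rightarrow> nat set \<Rightarrow> nat set" where
  "wj seq = wjR (rev seq)"

lemma witmap_Suc:
  assumes "i < length seq"
  shows "witmap G (take (Suc i) seq) = (witmap G (take i seq))(fst (seq!i) :=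
           (\<Union>f\<in>cliqueE (snd (seq!i)) - {fst (seq!i)}. witmap G (take i seq) f))"
  using assms by (cases "seq ! i") (simp add: witmap_def take_Suc_conv_app_nth)

lemma wj_Suc:
  assumes "i < length seq"
  shows "wj (take (Suc i) seq) = (wj (take i seq))(fst (seq!i) :=
           insert i (\<Union>f\<in>cliqueE (snd (seq!i)) - {fst (seq!i)}. wj (take i seq) f))"
  using assms by (cases "seq ! i") (simp add: wj_def take_Suc_conv_app_nth min_def)

lemma cover:
  assumes fK: "finite K" and cK: "card K \<ge> 3" and e: "e \<in> cliqueE K"
  shows "\<Union>(cliqueE K - {e}) = K"
proof
  show "\<Union>(cliqueE K - {e}) \<subseteq> K" unfolding cliqueE_def by blast
  show "K \<subseteq> \<Union>(cliqueE K - {e})"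
  proof
    fix v assume vK: "v \<in> K"
    have eK: "e \<subseteq> K" and ce: "card e = 2" using e unfolding cliqueE_def by auto
    obtain w where wK: "w \<in> K" and wv: "w \<noteq> v" and we: "{v, w} \<noteq> e"
    proof (cases "v \<in> e")
      case True
      have "card e < card K" using ce cK by simp
      have "K - e \<noteq> {}"
      proof
        assume "K - e = {}"
        then have "K \<subseteq> e" by blast
        moreover have "finite e" using eK fK finite_subset by blast
        ultimately have "card K \<le> card e" by (rule card_mono[rotated])
        then show False using \<open>card e < card K\<close> by simp
      qed
      then obtain w where w1: "w \<in> K" and w2: "w \<notin> e" by auto
      show ?thesis
      proof (rule that[OF w1])
        show "w \<noteq> v" using w2 True by blast
        show "{v, w} \<noteq> e" using w2 by blast
      qed
    next
      case False
      have "e \<noteq> {}" using ce by auto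
      then obtain w where w1: "w \<in> e" by auto
      show ?thesis
      proof (rule that)
        show "w \<in> K" using w1 eK by blast
        show "w \<noteq> v" using w1 False by blast
        show "{v, w} \<noteq> e" using False by blast
      qed
    qed
    have "card {v, w} = 2" using wv by simp
    then have "{v, w} \<in> cliqueE K - {e}" using vK wK we unfolding cliqueE_def by blast
    then show "v \<in> \<Union>(cliqueE K - {e})" by auto
  qed
qed

definition nice :: "nat set set \<Rightarrow> (nat \<Rightarrow> nat set) \<Rightarrow> (nat \<Rightarrow> nat set) \<Rightarrow> nat set set \<Rightarrow> nat set \<Rightarrow> nat set \<Rightarrow> nat \<Rightarrow> bool" where
  "nice G V u W J f i \<longleftrightarrow> W = (EJ V J \<union> {f}) \<inter> G \<and> EJ V J \<subseteq> G \<union> u ` J \<and> \<Union>W = f \<union> VJ V J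
     \<and> J \<subseteq> {..<i} \<and> (f \<in> G \<longrightarrow> J = {})
     \<and> (f \<notin> G \<longrightarrow> (\<exists>l\<in>J. f = u l \<and> (\<forall>a\<in>J. a \<le> l) \<and>
            (\<forall>a\<in>J. a \<noteq> l \<longrightarrow> (\<exists>b\<in>J. a < b \<and> u a \<in> cliqueE (V b)))))"

lemma niceD:
  assumes "nice G V u W J f i"
  shows "W = (EJ V J \<union> {f}) \<inter> G" "EJ V J \<subseteq> G \<union> u ` J" "\<Union>W = f \<union> VJ V J"
    "J \<subseteq> {..<i}" "f \<in> G \<Longrightarrow> J = {}"
    "f \<notin> G \<Longrightarrow> (\<exists>l\<in>J. f = u l \<and> (\<forall>a\<in>J. a \<le> l) \<and>
            (\<forall>a\<in>J. a \<noteq> l \<longrightarrow> (\<exists>b\<in>J. a < b \<and> u a \<in> cliqueE (V b))))"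
  using assms unfolding nice_def by (elim conjE; simp)+

lemma nice_mono: "nice G V u W J f i \<Longrightarrow> i \<le> i' \<Longrightarrow> nice G V u W J f i'"
  unfolding nice_def by auto

lemma nice_step:
  assumes uG: "u i \<notin> G" and ui: "u i \<in> cliqueE (V i)" and fV: "finite (V i)" and cV: "card (V i) \<ge> 3"
    and N: "\<forall>g\<in>cliqueE (V i) - {u i}. nice G V u (W g) (J g) g i"
  shows "nice G V u (\<Union>g\<in>cliqueE (V i) - {u i}. W g) (insert i (\<Union>g\<in>cliqueE (V i) - {u i}. J g)) (u i) (Suc i)"
proof -
  define C where "C = cliqueE (V i) - {u i}"
  define JJ where "JJ = insert i (\<Union>g\<in>C. J g)"
  have NC: "\<And>g. g \<in> C \<Longrightarrow> nice G V u (W g) (J g) g i" using N C_def by auto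
  have Wg: "\<And>g. g \<in> C \<Longrightarrow> W g = (EJ V (J g) \<union> {g}) \<inter> G" using NC niceD(1) by metis
  have EJg: "\<And>g. g \<in> C \<Longrightarrow> EJ V (J g) \<subseteq> G \<union> u ` J g" using NC niceD(2) by metis
  have UWg: "\<And>g. g \<in> C \<Longrightarrow> \<Union>(W g) = g \<union> VJ V (J g)" using NC niceD(3) by metis
  have Jg: "\<And>g. g \<in> C \<Longrightarrow> J g \<subseteq> {..<i}" using NC niceD(4) by metis
  have JgG: "\<And>g. g \<in> C \<Longrightarrow> g \<in> G \<Longrightarrow> J g = {}" using NC niceD(5) by metis
  have Jng: "\<And>g. g \<in> C \<Longrightarrow> g \<notin> G \<Longrightarrow> (\<exists>l\<in>J g. g = u l \<and> (\<forall>a\<in>J g. a \<le> l) \<and>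
            (\<forall>a\<in>J g. a \<noteq> l \<longrightarrow> (\<exists>b\<in>J g. a < b \<and> u a \<in> cliqueE (V b))))"
    using NC niceD(6) by metis
  have EJJ: "EJ V JJ = cliqueE (V i) \<union> (\<Union>g\<in>C. EJ V (J g))" unfolding JJ_def EJ_def by auto
  have VJJ: "VJ V JJ = V i \<union> (\<Union>g\<in>C. VJ V (J g))" unfolding JJ_def VJ_def by auto
  have cl: "cliqueE (V i) = insert (u i) C" unfolding C_def using ui by auto
  have P1: "(\<Union>g\<in>C. W g) = (EJ V JJ \<union> {u i}) \<inter> G"
  proof -
    have "(\<Union>g\<in>C. W g) = (\<Union>g\<in>C. (EJ V (J g) \<union> {g}) \<inter> G)" using Wg by auto
    also have "\<dots> = (EJ V JJ \<union> {u i}) \<inter> G" unfolding EJJ cl using uG by auto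
    finally show ?thesis .
  qed
  have P2: "EJ V JJ \<subseteq> G \<union> u ` JJ"
  proof
    fix x assume "x \<in> EJ V JJ"
    then consider "x = u i" | "x \<in> C" | g where "g \<in> C" "x \<in> EJ V (J g)" unfolding EJJ cl by auto
    then show "x \<in> G \<union> u ` JJ"
    proof cases
      case 1 then show ?thesis unfolding JJ_def by auto
    next
      case 2
      show ?thesis
      proof (cases "x \<in> G")
        case False
        then obtain l where "l \<in> J x" "x = u l" using Jng[OF 2] by auto
        then show ?thesis using 2 unfolding JJ_def by auto
      qed simp
    next
      case 3
      then show ?thesis using EJg[OF 3(1)] unfolding JJ_def by auto
    qed
  qed
  have P3: "\<Union>(\<Union>g\<in>C. W g) = u i \<union> VJ V JJ"
  proof -
    have "\<Union>(\<Union>g\<in>C. W g) = (\<Union>g\<in>C. \<Union>(W g))" by blast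
    also have "\<dots> = (\<Union>g\<in>C. g \<union> VJ V (J g))" using UWg by (intro SUP_cong refl) blast
    also have "\<dots> = \<Union>C \<union> (\<Union>g\<in>C. VJ V (J g))" by auto
    also have "\<Union>C = V i" unfolding C_def using cover[OF fV cV ui] .
    also have "V i \<union> (\<Union>g\<in>C. VJ V (J g)) = u i \<union> VJ V JJ"
      unfolding VJJ using ui unfolding cliqueE_def by auto
    finally show ?thesis .
  qed
  have P6: "\<forall>a\<in>JJ. a \<le> i"
  proof
    fix a assume "a \<in> JJ"
    then consider "a = i" | g where "g \<in> C" "a \<in> J g" unfolding JJ_def by auto
    then show "a \<le> i"
    proof cases
      case 2 then show ?thesis using Jg[OF 2(1)] by auto
    qed simp
  qed
  have P4: "JJ \<subseteq> {..<Suc i}" using P6 by auto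
  have P7: "\<forall>a\<in>JJ. a \<noteq> i \<longrightarrow> (\<exists>b\<in>JJ. a < b \<and> u a \<in> cliqueE (V b))"
  proof (intro ballI impI)
    fix a assume aJ: "a \<in> JJ" and ai: "a \<noteq> i"
    then obtain g where gC: "g \<in> C" and ag: "a \<in> J g" unfolding JJ_def by auto
    have gG: "g \<notin> G" using JgG[OF gC] ag by auto
    obtain l where lJ: "l \<in> J g" and gl: "g = u l" and mxl: "\<forall>a\<in>J g. a \<le> l"
      and cn: "\<forall>a\<in>J g. a \<noteq> l \<longrightarrow> (\<exists>b\<in>J g. a < b \<and> u a \<in> cliqueE (V b))"
      using Jng[OF gC gG] by blast
    show "\<exists>b\<in>JJ. a < b \<and> u a \<in> cliqueE (V b)"
    proof (cases "a = l")
      case True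
      have "a < i" using Jg[OF gC] ag by auto
      moreover have "u a \<in> cliqueE (V i)" using True gl gC unfolding C_def by auto
      ultimately show ?thesis unfolding JJ_def by auto
    next
      case False
      then obtain b where "b \<in> J g" "a < b" "u a \<in> cliqueE (V b)" using cn ag by auto
      then show ?thesis using gC unfolding JJ_def by auto
    qed
  qed
  show ?thesis
    unfolding nice_def C_def[symmetric] JJ_def[symmetric]
    using P1 P2 P3 P4 P6 P7 uG unfolding JJ_def by auto
qed



lemma vs_facts:
  assumes vs: "valid_seq r n G seq" and il: "i < length seq"
  shows "fst (seq!i) \<notin> G" "card (snd (seq!i)) = r" "fst (seq!i) \<in> cliqueE (snd (seq!i))"
    "\<And>f. f \<in> cliqueE (snd (seq!i)) - {fst (seq!i)} \<Longrightarrow> f \<in> G \<or> (\<exists>l<i. f = fst (seq!l))"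
proof -
  show "fst (seq!i) \<notin> G" "card (snd (seq!i)) = r" "fst (seq!i) \<in> cliqueE (snd (seq!i))"
    using vs il unfolding valid_seq_def by auto
  fix f assume f: "f \<in> cliqueE (snd (seq!i)) - {fst (seq!i)}"
  then have "f \<in> G \<or> f \<in> set (map fst (take i seq))" using vs il unfolding valid_seq_def by auto
  moreover have "\<exists>l<i. f = fst (seq!l)" if "f \<in> set (map fst (take i seq))"
  proof -
    have "\<exists>j. j < i \<and> fst (seq!j) = f" using that il by (auto simp: in_set_conv_nth) (metis fst_conv)
    then show ?thesis by metis
  qed
  ultimately show "f \<in> G \<or> (\<exists>l<i. f = fst (seq!l))" by blast
qed

lemma vs_distinct:
  assumes vs: "valid_seq r n G seq" and "a < length seq" "b < length seq" "fst (seq!a) = fst (seq!b)"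
  shows "a = b"
proof -
  have "distinct (map fst seq)" using vs unfolding valid_seq_def by auto
  then show ?thesis using assms(2-4) by (simp add: nth_eq_iff_index_eq[symmetric])
qed

lemma inv:
  assumes r4: "r \<ge> 4" and vs: "valid_seq r n G seq"
    and u: "u = (\<lambda>l. fst (seq!l))" and V: "V = (\<lambda>l. snd (seq!l))"
  shows "i \<le> length seq \<Longrightarrow> \<forall>f. (f \<in> G \<or> f \<in> u ` {..<i}) \<longrightarrow>
          nice G V u (witmap G (take i seq) f) (wj (take i seq) f) f i"
proof (induction i)
  case 0
  show ?case
  proof (intro allI impI)
    fix f assume "f \<in> G \<or> f \<in> u ` {..<0}"
    then have fG: "f \<in> G" by auto
    have "witmap G (take 0 seq) f = {f}" using fG by (simp add: witmap_def)
    moreover have "wj (take 0 seq) f = {}" by (simp add: wj_def)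
    ultimately show "nice G V u (witmap G (take 0 seq) f) (wj (take 0 seq) f) f 0"
      unfolding nice_def EJ_def VJ_def using fG by auto
  qed
next
  case (Suc i)
  then have il: "i < length seq" by simp
  have IH: "\<And>f. f \<in> G \<or> f \<in> u ` {..<i} \<Longrightarrow> nice G V u (witmap G (take i seq) f) (wj (take i seq) f) f i"
    using Suc by auto
  have uiG: "u i \<notin> G" and cVi: "card (V i) = r" and ui: "u i \<in> cliqueE (V i)"
    using vs_facts[OF vs il] u V by auto
  have Cf: "\<And>f. f \<in> cliqueE (V i) - {u i} \<Longrightarrow> f \<in> G \<or> f \<in> u ` {..<i}"
    using vs_facts(4)[OF vs il] u V by auto
  have fVi: "finite (V i)" using cVi r4 by (intro card_ge_0_finite) simp
  show ?case
  proof (intro allI impI)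
    fix f assume f: "f \<in> G \<or> f \<in> u ` {..<Suc i}"
    show "nice G V u (witmap G (take (Suc i) seq) f) (wj (take (Suc i) seq) f) f (Suc i)"
    proof (cases "f = u i")
      case True
      have W: "witmap G (take (Suc i) seq) (u i) = (\<Union>g\<in>cliqueE (V i) - {u i}. witmap G (take i seq) g)"
        using witmap_Suc[OF il, of G] True u V by simp
      have J: "wj (take (Suc i) seq) (u i) = insert i (\<Union>g\<in>cliqueE (V i) - {u i}. wj (take i seq) g)"
        using wj_Suc[OF il] True u V by simp
      show ?thesis unfolding True W J
        by (rule nice_step[where G=G and V=V and u=u and i=i, OF uiG ui fVi]) (use cVi r4 IH Cf in auto)
    next
      case False
      have W: "witmap G (take (Suc i) seq) f = witmap G (take i seq) f"
      proof -
        have ne: "f \<noteq> fst (seq!i)" using False u by simp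
        show ?thesis unfolding witmap_Suc[OF il] using fun_upd_other[OF ne] by metis
      qed
      have J: "wj (take (Suc i) seq) f = wj (take i seq) f"
      proof -
        have ne: "f \<noteq> fst (seq!i)" using False u by simp
        show ?thesis unfolding wj_Suc[OF il] using fun_upd_other[OF ne] by metis
      qed
      have "f \<in> G \<or> f \<in> u ` {..<i}" using f False by (auto simp: less_Suc_eq)
      then have "nice G V u (witmap G (take i seq) f) (wj (take i seq) f) f i" by (rule IH)
      then show ?thesis unfolding W J by (rule nice_mono) simp
    qed
  qed
qed



theorem lemma3p2:
  fixes r :: nat and F :: "nat set set"
  assumes "r \<ge> 4" and "witness_set r F"
  shows "real (card F) \<ge> lam r * (real (vF F) - 2) + 1"
proof -
  note r4 = assms(1)
  obtain n G seq e where Gs: "G \<subseteq> edgesK n" and vs: "valid_seq r n G seq"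
    and bs: "set (map fst seq) = bootstrap r n G - G" and eb: "e \<in> bootstrap r n G"
    and Fd: "F = witmap G seq e"
    using assms(2) unfolding witness_set_def by blast
  define u where "u = (\<lambda>l. fst (seq!l))"
  define V where "V = (\<lambda>l. snd (seq!l))"
  define len where "len = length seq"
  have tk: "take len seq = seq" unfolding len_def by simp
  have INV: "\<And>f. f \<in> G \<or> f \<in> u ` {..<len} \<Longrightarrow> nice G V u (witmap G seq f) (wj seq f) f len"
  proof -
    fix f assume f: "f \<in> G \<or> f \<in> u ` {..<len}"
    have "\<forall>f. (f \<in> G \<or> f \<in> u ` {..<len}) \<longrightarrow>
          nice G V u (witmap G (take len seq) f) (wj (take len seq) f) f len"
      by (rule inv[OF r4 vs u_def V_def]) (simp add: len_def)
    then show "nice G V u (witmap G seq f) (wj seq f) f len" using f unfolding tk by blast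
  qed
  show ?thesis
  proof (cases "e \<in> G")
    case True
    have N: "nice G V u F (wj seq e) e len" using INV True Fd by auto
    have "wj seq e = {}" using niceD(5)[OF N] True by simp
    then have "F = {e}" using niceD(1)[OF N] True by (simp add: EJ_def)
    moreover have "card e = 2" using Gs True unfolding edgesK_def by auto
    ultimately show ?thesis by (simp add: vF_def)
  next
    case False
    have "e \<in> set (map fst seq)" using bs eb False by auto
    then obtain k where "k < len" "e = u k" unfolding u_def len_def by (auto simp: in_set_conv_nth)
    then have eu: "e \<in> u ` {..<len}" by auto
    define J where "J = wj seq e"
    have N: "nice G V u F J e len" using INV eu Fd J_def by auto
    have FJ: "F = EJ V J \<inter> G" using niceD(1)[OF N] False by auto
    have EJs: "EJ V J \<subseteq> G \<union> u ` J" using niceD(2)[OF N] .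
    have UF: "\<Union>F = e \<union> VJ V J" using niceD(3)[OF N] .
    have Jl: "J \<subseteq> {..<len}" using niceD(4)[OF N] .
    obtain l where lJ: "l \<in> J" and el: "e = u l" and mx: "\<forall>a\<in>J. a \<le> l"
      and cn: "\<forall>a\<in>J. a \<noteq> l \<longrightarrow> (\<exists>b\<in>J. a < b \<and> u a \<in> cliqueE (V b))"
      using niceD(6)[OF N False] by blast
    have fac: "\<And>a. a < len \<Longrightarrow> u a \<notin> G \<and> card (V a) = r \<and> u a \<in> cliqueE (V a)"
      using vs_facts[OF vs] unfolding u_def V_def len_def by auto
    have finV: "\<And>a. a < len \<Longrightarrow> finite (V a)"
    proof -
      fix a assume "a < len"
      then have "card (V a) = r" using fac by auto
      then show "finite (V a)" using r4 by (intro card_ge_0_finite) simp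
    qed
    have cf: "cliqfam r len V u"
      unfolding cliqfam_def
    proof (rule conjI; intro allI impI)
      fix a assume "a < len"
      then show "finite (V a) \<and> card (V a) = r \<and> u a \<in> cliqueE (V a)" using fac finV by auto
    next
      fix j a assume ja: "j < a \<and> a < len"
      show "u a \<notin> cliqueE (V j)"
      proof
        assume ua: "u a \<in> cliqueE (V j)"
        have jl: "j < len" using ja by auto
        have "u a \<noteq> u j"
        proof
          assume "u a = u j"
          then have "a = j" using vs_distinct[OF vs, of a j] ja unfolding u_def len_def by auto
          then show False using ja by simp
        qed
        then have "u a \<in> cliqueE (V j) - {u j}" using ua by auto
        then have "u a \<in> G \<or> (\<exists>l0<j. u a = u l0)"
          using vs_facts(4)[OF vs, of j "u a"] jl unfolding u_def V_def len_def by auto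
        then show False
        proof
          assume "u a \<in> G" then show False using fac ja by auto
        next
          assume "\<exists>l0<j. u a = u l0"
          then obtain l0 where l0: "l0 < j" "u a = u l0" by auto
          then have "a = l0" using vs_distinct[OF vs, of a l0] ja unfolding u_def len_def by auto
          then show False using l0 ja by simp
        qed
      qed
    qed
    have ph: "phi r V J \<ge> 1" using phi_conn[OF r4 cf Jl lJ mx cn] .
    have fJ: "finite J" using Jl finite_subset by blast
    have fEJ: "finite (EJ V J)" using finite_EJ[OF fJ] finV Jl by auto
    have uJ: "u ` J \<subseteq> EJ V J" using fac Jl unfolding EJ_def by auto
    have EJeq: "EJ V J = F \<union> u ` J" using FJ EJs uJ by auto
    have dj: "F \<inter> u ` J = {}" using FJ fac Jl by auto
    have inj: "inj_on u J"
    proof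
      fix a b assume "a \<in> J" "b \<in> J" "u a = u b"
      then show "a = b" using vs_distinct[OF vs, of a b] Jl unfolding u_def len_def by auto
    qed
    have fF: "finite F" using FJ fEJ by auto
    have cE: "card (EJ V J) = card F + card J"
      unfolding EJeq using card_Un_disjoint[OF fF _ dj] card_image[OF inj] fJ by auto
    have "e \<subseteq> V l" using el fac lJ Jl unfolding cliqueE_def by auto
    then have "e \<subseteq> VJ V J" using lJ unfolding VJ_def by auto
    then have vF: "vF F = card (VJ V J)" unfolding vF_def UF by (simp add: Un_absorb1)
    show ?thesis using ph unfolding phi_def cE vF by simp
  qed
qed


end
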